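(* Let $r=\dfrac{4(3s^2-4s+2)}{s^2+4s+6}$ and $$y=\frac{(s+1)(7s^4+16s^3+4s^2-4)\,r}{s^3(s-2)(s^4-4s^2+32s-28)},\qquad t=\left(\frac{(s+1)^2\,r}{(s-2)^2s^2}\right)^2.$$ Then $y(t)$ is a solution of $\mathrm{P}_{\mathrm{VI}}$ with parameters $(\theta_1,\theta_2,\theta_3,\theta_4)=(1/3,1/2,1/2,2/3)$.
   Context: $\mathrm{P}_{\mathrm{VI}}$ is the equation $$\frac{d^2y}{dt^2}=\frac12\Big(\frac1y+\frac1{y-1}+\frac1{y-t}\Big)\Big(\frac{dy}{dt}\Big)^2-\Big(\frac1t+\frac1{t-1}+\frac1{y-t}\Big)\frac{dy}{dt}+\frac{y(y-1)(y-t)}{t^2(t-1)^2}\Big(\alpha+\beta\frac{t}{y^2}+\gamma\frac{t-1}{(y-1)^2}+\delta\frac{t(t-1)}{(y-t)^2}\Big),$$ with $\alpha=(\theta_4-1)^2/2$, $\beta=-\theta_1^2/2$, $\gamma=\theta_3^2/2$, $\delta=(1-\theta_2^2)/2$. When $y,t$ are given as rational functions of a parameter on a curve, derivatives with respect to $t$ are computed via the chain rule. *)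

theory Defs
  imports "HOL-Analysis.Analysis"
begin

definition PVI_rhs :: "complex \<Rightarrow> complex \<Rightarrow> complex \<Rightarrow> complex \<Rightarrow> complex \<Rightarrow> complex \<Rightarrow> complex \<Rightarrow> complex" where
  "PVI_rhs th1 th2 th3 th4 t y y' =
     (let \<alpha> = (th4 - 1)^2 / 2; \<beta> = - (th1^2) / 2; \<gamma> = th3^2 / 2; \<delta> = (1 - th2^2) / 2 in
      (1/2) * (1/y + 1/(y - 1) + 1/(y - t)) * y'^2
      - (1/t + 1/(t - 1) + 1/(y - t)) * y'
      + (y * (y - 1) * (y - t)) / (t^2 * (t - 1)^2)
        * (\<alpha> + \<beta> * t / y^2 + \<gamma> * (t - 1) / (y - 1)^2 + \<delta> * t * (t - 1) / (y - t)^2))"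

text \<open>A parametrized curve (T s, Y s) solves PVI at parameter s, derivatives in t
  computed via the chain rule: dy/dt = Y'/T', d^2y/dt^2 = (Y'' T' - Y' T'')/T'^3.\<close>
definition solves_PVI_at ::
  "complex \<Rightarrow> complex \<Rightarrow> complex \<Rightarrow> complex \<Rightarrow> (complex \<Rightarrow> complex) \<Rightarrow> (complex \<Rightarrow> complex) \<Rightarrow> complex \<Rightarrow> bool" where
  "solves_PVI_at th1 th2 th3 th4 T Y s \<longleftrightarrow>
     (let y1 = deriv Y s / deriv T s;
          y2 = (deriv (deriv Y) s * deriv T s - deriv Y s * deriv (deriv T) s) / (deriv T s)^3
      in y2 = PVI_rhs th1 th2 th3 th4 (T s) (Y s) y1)"

definition r10 :: "complex \<Rightarrow> complex" where
  "r10 s = 4 * (3 * s^2 - 4 * s + 2) / (s^2 + 4 * s + 6)"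

definition Y10 :: "complex \<Rightarrow> complex" where
  "Y10 s = (s + 1) * (7 * s^4 + 16 * s^3 + 4 * s^2 - 4) * r10 s /
           (s^3 * (s - 2) * (s^4 - 4 * s^2 + 32 * s - 28))"

definition T10 :: "complex \<Rightarrow> complex" where
  "T10 s = ((s + 1)^2 * r10 s / ((s - 2)^2 * s^2))^2"

end

theory Submission
  imports Defs
begin


fun padd :: "int list \<Rightarrow> int list \<Rightarrow> int list" where
  "padd [] q = q" | "padd p [] = p" | "padd (x#p) (y#q) = (x+y) # padd p q"

definition psmul :: "int \<Rightarrow> int list \<Rightarrow> int list" where
  "psmul c p = map (\<lambda>x. c * x) p"

definition psub :: "int list \<Rightarrow> int list \<Rightarrow> int list" where
  "psub p q = padd p (psmul (-1) q)"

fun pmul :: "int list \<Rightarrow> int list \<Rightarrow> int list" where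
  "pmul [] q = []" | "pmul (x#p) q = padd (psmul x q) (0 # pmul p q)"

fun pder :: "int list \<Rightarrow> int list" where
  "pder [] = []" | "pder (c#cs) = padd cs (0 # pder cs)"

fun peval :: "int list \<Rightarrow> 'a::comm_ring_1 \<Rightarrow> 'a" where
  "peval [] x = 0" | "peval (c#cs) x = of_int c + x * peval cs x"

definition zl :: "int list \<Rightarrow> bool" where "zl p = list_all (\<lambda>c. c = 0) p"

lemma peval_padd[simp]: "peval (padd p q) x = peval p x + peval q x"
  by (induction p q rule: padd.induct) (auto simp: algebra_simps)

lemma peval_psmul[simp]: "peval (psmul c p) x = of_int c * peval p x"
  by (induction p) (auto simp: psmul_def algebra_simps)

lemma peval_psub[simp]: "peval (psub p q) x = peval p x - peval q x"
  by (simp add: psub_def)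

lemma peval_pmul[simp]: "peval (pmul p q) x = peval p x * peval q x"
  by (induction p) (auto simp: algebra_simps)

lemma peval_zl: "zl p \<Longrightarrow> peval p x = 0"
  by (induction p) (auto simp: zl_def)

lemma peval_deriv:
  "((\<lambda>x. peval p x) has_field_derivative peval (pder p) (x::complex)) (at x within S)"
proof (induction p)
  case Nil
  then show ?case by simp
next
  case (Cons c cs)
  have "((\<lambda>x. of_int c + x * peval cs x) has_field_derivative
          (0 + (x * peval (pder cs) x + 1 * peval cs x))) (at x within S)"
    by (intro DERIV_add DERIV_const DERIV_mult' DERIV_ident Cons)
  then show ?case by (simp add: add.commute)
qed



definition RHS :: "complex \<Rightarrow> complex \<Rightarrow> complex \<Rightarrow> complex \<Rightarrow> complex \<Rightarrow> complex \<Rightarrow> complex" where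
  "RHS y ym1 ymt t tm1 W =
     (1/2) * (1/y + 1/ym1 + 1/ymt) * W^2 - (1/t + 1/tm1 + 1/ymt) * W
     + (y * ym1 * ymt) / (t^2 * tm1^2) * (1/18 + (-1/18) * t / y^2 + (1/8) * tm1 / ym1^2 + (3/8) * t * tm1 / ymt^2)"

lemma rhs_eq: "PVI_rhs (1/3) (1/2) (1/2) (2/3) t y W = RHS y (y - 1) (y - t) t (t - 1) W"
  unfolding PVI_rhs_def RHS_def Let_def by (simp add: power2_eq_square)

lemma rhs_split:
  fixes y ym1 ymt t tm1 W Z :: complex
  assumes "y \<noteq> 0" "ym1 \<noteq> 0" "ymt \<noteq> 0" "t \<noteq> 0" "tm1 \<noteq> 0"
  shows "2 * y * ym1 * ymt * t^2 * tm1^2 * RHS y ym1 ymt t tm1 W =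
     t^2 * tm1^2 * (ym1 * ymt + y * ymt + y * ym1) * W^2
     - 2 * y * ym1 * t * tm1 * (tm1 * ymt + t * ymt + t * tm1) * W
     + 2 * (1/18 * y^2 * ym1^2 * ymt^2 - 1/18 * t * ym1^2 * ymt^2 + 1/8 * tm1 * y^2 * ymt^2
            + 3/8 * t * tm1 * y^2 * ym1^2)"
  unfolding RHS_def using assms by (simp add: field_simps) algebra

lemma key:
  fixes s m p Q P R G ab nd e0 y1 v0 y2 t2 y ym1 ymt t tm1 W Z :: complex
  assumes nz: "s \<noteq> 0" "m \<noteq> 0" "p \<noteq> 0" "Q \<noteq> 0" "P \<noteq> 0" "R \<noteq> 0" "G \<noteq> 0"
     "ab \<noteq> 0" "nd \<noteq> 0" "e0 \<noteq> 0" "v0 \<noteq> 0"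
  and hy: "y = 4 * p * R * G / (s^3 * m * Q * P)" and hym1: "ym1 = ab / (s^3 * m * Q * P)"
  and ht: "t = 16 * p^4 * R^2 / (s^4 * m^4 * Q^2)" and htm1: "tm1 = nd / (s^4 * m^4 * Q^2)"
  and hymt: "ymt = p * R * e0 / (s^4 * m^4 * Q^2 * P)"
  and hW: "W = (y1 / (s^4 * m^2 * Q^2 * P^2)) / (192 * p^3 * R * v0 / (s^5 * m^5 * Q^3))"
  and hZ: "Z = ((y2 / (s^5 * m^3 * Q^3 * P^3)) * (192 * p^3 * R * v0 / (s^5 * m^5 * Q^3))
              - (y1 / (s^4 * m^2 * Q^2 * P^2)) * (192 * p^2 * t2 / (s^6 * m^6 * Q^4))) / (192 * p^3 * R * v0 / (s^5 * m^5 * Q^3))^3"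
  and hKr: "16 * G * ab * e0 * nd^2 * (y2 * p * R * v0 - y1 * P * t2)
      - 2 * v0 * nd^2 * ((ab + 4 * p * R * G) * e0 + 4 * G * ab * s * m^3 * Q) * y1^2
      + 192 * P * v0^2 * G * ab * nd * ((nd + 16 * p^4 * R^2) * e0 + 16 * p^3 * R * nd * P) * y1
      - v0^3 * p * R * s * m * Q * (512 * G^2 * ab^2 * e0^2 * m^2 - 512 * p^2 * ab^2 * e0^2 * s^2 * P^2
          + 1152 * G^2 * nd * e0^2 * s^2 * P^2 + 55296 * p^2 * nd * G^2 * ab^2 * m^2 * P^2) = 0"
  shows "Z = RHS y ym1 ymt t tm1 W"
proof -
  define F where "F = p^3 * R^3 / (288 * s^21 * m^15 * Q^9 * P^6 * v0^3)"
  have i: "2 * y * ym1 * ymt * t^2 * tm1^2 * Z = F * (16 * G * ab * e0 * nd^2 * (y2 * p * R * v0 - y1 * P * t2))"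
    unfolding hy hym1 ht htm1 hymt hZ F_def using nz by (simp add: field_simps) algebra
  have ii: "t^2 * tm1^2 * (ym1 * ymt + y * ymt + y * ym1) * W^2
      = F * (2 * v0 * nd^2 * ((ab + 4 * p * R * G) * e0 + 4 * G * ab * s * m^3 * Q) * y1^2)"
    unfolding hy hym1 ht htm1 hymt hW F_def using nz by (simp add: field_simps) algebra
  have iii: "2 * y * ym1 * t * tm1 * (tm1 * ymt + t * ymt + t * tm1) * W
      = F * (192 * P * v0^2 * G * ab * nd * ((nd + 16 * p^4 * R^2) * e0 + 16 * p^3 * R * nd * P) * y1)"
    unfolding hy hym1 ht htm1 hymt hW F_def using nz by (simp add: field_simps) algebra
  have iv: "2 * (1/18 * y^2 * ym1^2 * ymt^2 - 1/18 * t * ym1^2 * ymt^2 + 1/8 * tm1 * y^2 * ymt^2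
            + 3/8 * t * tm1 * y^2 * ym1^2)
      = F * (v0^3 * p * R * s * m * Q * (512 * G^2 * ab^2 * e0^2 * m^2 - 512 * p^2 * ab^2 * e0^2 * s^2 * P^2
          + 1152 * G^2 * nd * e0^2 * s^2 * P^2 + 55296 * p^2 * nd * G^2 * ab^2 * m^2 * P^2))"
    unfolding hy hym1 ht htm1 hymt F_def using nz by (simp add: field_simps) algebra
  have nz2: "y \<noteq> 0" "ym1 \<noteq> 0" "ymt \<noteq> 0" "t \<noteq> 0" "tm1 \<noteq> 0"
    unfolding hy hym1 ht htm1 hymt using nz by auto
  define L where "L = 2 * y * ym1 * ymt * t^2 * tm1^2"
  define A1 where "A1 = t^2 * tm1^2 * (ym1 * ymt + y * ymt + y * ym1) * W^2"
  define A2 where "A2 = 2 * y * ym1 * t * tm1 * (tm1 * ymt + t * ymt + t * tm1) * W"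
  define A3 where "A3 = 2 * (1/18 * y^2 * ym1^2 * ymt^2 - 1/18 * t * ym1^2 * ymt^2 + 1/8 * tm1 * y^2 * ymt^2
            + 3/8 * t * tm1 * y^2 * ym1^2)"
  define X1 where "X1 = 16 * G * ab * e0 * nd^2 * (y2 * p * R * v0 - y1 * P * t2)"
  define X2 where "X2 = 2 * v0 * nd^2 * ((ab + 4 * p * R * G) * e0 + 4 * G * ab * s * m^3 * Q) * y1^2"
  define X3 where "X3 = 192 * P * v0^2 * G * ab * nd * ((nd + 16 * p^4 * R^2) * e0 + 16 * p^3 * R * nd * P) * y1"
  define X4 where "X4 = v0^3 * p * R * s * m * Q * (512 * G^2 * ab^2 * e0^2 * m^2 - 512 * p^2 * ab^2 * e0^2 * s^2 * P^2
          + 1152 * G^2 * nd * e0^2 * s^2 * P^2 + 55296 * p^2 * nd * G^2 * ab^2 * m^2 * P^2)"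
  have rs: "L * RHS y ym1 ymt t tm1 W = A1 - A2 + A3"
    unfolding L_def A1_def A2_def A3_def using rhs_split[OF nz2, of W] by simp
  have i': "L * Z = F * X1" using i unfolding L_def X1_def .
  have ii': "A1 = F * X2" using ii unfolding A1_def X2_def .
  have iii': "A2 = F * X3" using iii unfolding A2_def X3_def .
  have iv': "A3 = F * X4" using iv unfolding A3_def X4_def .
  have k: "X1 - X2 + X3 - X4 = 0" using hKr unfolding X1_def X2_def X3_def X4_def .
  have "L * (Z - RHS y ym1 ymt t tm1 W) = L * Z - L * RHS y ym1 ymt t tm1 W"
    by (simp add: right_diff_distrib)
  also have "\<dots> = F * (X1 - X2 + X3 - X4)"
    unfolding rs i' ii' iii' iv' by (simp add: algebra_simps)
  also have "\<dots> = 0" using k by simp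
  finally have "L * (Z - RHS y ym1 ymt t tm1 W) = 0" .
  moreover have "L \<noteq> 0" unfolding L_def using nz2 by simp
  ultimately show ?thesis by simp
qed


definition pL :: "int list" where "pL = [1, 1]"
definition RL :: "int list" where "RL = [2, -4, 3]"
definition GL :: "int list" where "GL = [-4, 0, 4, 16, 7]"
definition QL :: "int list" where "QL = [6, 4, 1]"
definition PL :: "int list" where "PL = [-28, 32, -4, 0, 1]"
definition sL :: "int list" where "sL = [0, 1]"
definition mL :: "int list" where "mL = [-2, 1]"
definition abL :: "int list" where "abL = [-32, 32, 48, -288, 240, 0, 120, 72, 6, -2, -1]"
definition ndL :: "int list" where "ndL = [64, 0, -192, 128, -240, 192, 0, 96, 60, 16, 12, 0, -1]"
definition e0L :: "int list" where "e0L = [896, 640, -2880, 384, 192, 0, 96, -96, -360, -40, 28]"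
definition y1L :: "int list" where "y1L = [32256, -63488, 3840, 49152, -7808, -53760, 175296, 12288, -87648, -13440, 976, 3072, -120, -992, -252]"
definition v0L :: "int list" where "v0L = [8, -8, 4, -8, -2, -2, -1]"
definition y2L :: "int list" where "y2L = [-43352064, 127475712, -88121344, -57667584, 70520832, 4247552, 76333056, -872448, -79794176, 7658496, -2503680, 23594496, -2993664, -8423424, 2441216, 2059008, 142464, -96224, -32544, 6672, 5968, 1008]"
definition t2L :: "int list" where "t2L = [960, -1856, 1120, -448, 784, -928, 592, 128, 388, 476, 134, 60, 15]"
definition YaL :: "int list" where "YaL = [-32, 32, 48, 48, -88, -72, 164, 84]"
definition YbL :: "int list" where "YbL = [0, 0, 0, 336, -328, -72, 44, 12, -6, 2, 1]"
definition TaL :: "int list" where "TaL = [64, 0, -192, 128, 336, -192, -224, 192, 144]"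
definition TbL :: "int list" where "TbL = [0, 0, 0, 0, 576, -384, -224, 96, 84, -16, -12, 0, 1]"
definition Y1dL :: "int list" where "Y1dL = [0, 0, 0, 0, 112896, -220416, 59200, 76800, -15616, -18240, 5488, 1280, -1328, -112, 172, 0, -8, 4, 1]"
definition T1dL :: "int list" where "T1dL = [0, 0, 0, 0, 0, -6912, 3456, 4608, -896, -2032, -8, 440, 76, -52, -14, 2, 1]"
definition Y2dL :: "int list" where "Y2dL = [0, 0, 0, 0, 0, 37933056, -111089664, 84059136, 27224576, -43043328, -7253760, 14588928, -505344, -2813952, 634880, 467328, -176448, -50880, 26208, 960, -3552, 240, 312, -28, -6, 6, 1]"
definition T2dL :: "int list" where "T2dL = [0, 0, 0, 0, 0, 0, 82944, -27648, -76032, 1536, 38848, 6976, -10224, -3840, 1344, 864, -24, -96, -12, 4, 1]"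
definition T1nL :: "int list" where "T1nL = [3072, 0, -6144, 1536, 3072, -768, 768, -4224, -5568, -2880, -2112, -576]"
definition T2nL :: "int list" where "T2nL = [184320, 12288, -313344, -12288, 193536, 36864, -92160, 73728, 237312, 264960, 283008, 154368, 51648, 17280, 2880]"

definition "ZbL = psub (pmul y2L (pmul (pmul pL RL) v0L)) (pmul y1L (pmul PL t2L))"
definition "B1L = padd (pmul (padd abL YaL) e0L) (pmul (pmul (psmul 4 (pmul GL abL)) (pmul sL (pmul (pmul mL mL) mL))) QL)"
definition "B2L = padd (pmul (padd ndL TaL) e0L) (psmul 16 (pmul (pmul (pmul (pmul pL pL) (pmul pL RL)) ndL) PL))"
definition "X1L = pmul (psmul 16 (pmul (pmul GL abL) (pmul e0L (pmul ndL ndL)))) ZbL"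
definition "X2L = pmul (psmul 2 (pmul (pmul v0L (pmul y1L y1L)) (pmul ndL ndL))) B1L"
definition "X3L = pmul (psmul 192 (pmul (pmul (pmul PL (pmul v0L v0L)) (pmul GL abL)) (pmul ndL y1L))) B2L"
definition "e0sqL = pmul e0L e0L"
definition "GsqL = pmul GL GL"
definition "absqL = pmul abL abL"
definition "P2s2L = pmul (pmul PL PL) [0,0,1]"
definition "InnL = padd (padd (psmul 512 (pmul (pmul GsqL absqL) (pmul e0sqL (pmul mL mL))))
   (psmul (-512) (pmul (pmul (pmul pL pL) absqL) (pmul e0sqL P2s2L))))
   (padd (psmul 1152 (pmul (pmul GsqL ndL) (pmul e0sqL P2s2L)))
   (psmul 55296 (pmul (pmul (pmul pL pL) (pmul ndL GsqL)) (pmul absqL (pmul (pmul mL mL) (pmul PL PL))))))"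
definition "X4L = pmul (pmul (pmul v0L (pmul v0L v0L)) (pmul (pmul pL RL) (pmul (pmul sL mL) QL))) InnL"
definition "KrL = psub (padd X1L X3L) (padd X2L X4L)"


lemma quot_deriv:
  assumes S: "open S" "x \<in> S" and f: "\<And>z. z \<in> S \<Longrightarrow> f z = peval a z / peval b z"
    and b: "peval b x \<noteq> (0::complex)" and c: "peval c x \<noteq> 0"
    and chk: "zl (psub (pmul (psub (pmul (pder a) b) (pmul a (pder b))) c) (pmul n (pmul b b)))"
  shows "(f has_field_derivative peval n x / peval c x) (at x)"
proof -
  have d: "((\<lambda>z. peval a z / peval b z) has_field_derivative
      (peval (pder a) x * peval b x - peval a x * peval (pder b) x) / (peval b x * peval b x)) (at x)"
    by (intro DERIV_divide peval_deriv b)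
  have "(peval (pder a) x * peval b x - peval a x * peval (pder b) x) * peval c x
        = peval n x * (peval b x * peval b x)"
    using peval_zl[OF chk, of x] by simp
  then have "(peval (pder a) x * peval b x - peval a x * peval (pder b) x) / (peval b x * peval b x)
        = peval n x / peval c x"
    using b c by (simp add: field_simps)
  with d have "((\<lambda>z. peval a z / peval b z) has_field_derivative peval n x / peval c x) (at x)"
    by simp
  then show ?thesis
    by (rule has_field_derivative_transform_within_open[OF _ S]) (simp add: f)
qed

lemma pl_s: "peval sL (z::complex) = z" by (simp add: sL_def)
lemma pl_m: "peval mL (z::complex) = z - 2" by (simp add: mL_def)
lemma pl_p: "peval pL (z::complex) = z + 1" by (simp add: pL_def)
lemma pl_Q: "peval QL (z::complex) = z^2 + 4*z + 6" by (simp add: QL_def; algebra)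
lemma pl_P: "peval PL (z::complex) = z^4 - 4*z^2 + 32*z - 28" by (simp add: PL_def; algebra)
lemma pl_R: "peval RL (z::complex) = 3*z^2 - 4*z + 2" by (simp add: RL_def; algebra)
lemma pl_G: "peval GL (z::complex) = 7*z^4 + 16*z^3 + 4*z^2 - 4" by (simp add: GL_def; algebra)

lemmas pls = pl_s pl_m pl_p pl_Q pl_P pl_R pl_G

lemma pl_Ya: "peval YaL (z::complex) = 4 * peval pL z * peval RL z * peval GL z"
  unfolding pls by (simp add: YaL_def; algebra)
lemma pl_Yb: "peval YbL (z::complex) = z^3 * peval mL z * peval QL z * peval PL z"
  unfolding pls by (simp add: YbL_def; algebra)
lemma pl_Ta: "peval TaL (z::complex) = 16 * peval pL z ^ 4 * peval RL z ^ 2"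
  unfolding pls by (simp add: TaL_def; algebra)
lemma pl_Tb: "peval TbL (z::complex) = z^4 * peval mL z ^ 4 * peval QL z ^ 2"
  unfolding pls by (simp add: TbL_def; algebra)
lemma pl_Y1d: "peval Y1dL (z::complex) = z^4 * peval mL z ^ 2 * peval QL z ^ 2 * peval PL z ^ 2"
  unfolding pls by (simp add: Y1dL_def; algebra)
lemma pl_T1d: "peval T1dL (z::complex) = z^5 * peval mL z ^ 5 * peval QL z ^ 3"
  unfolding pls by (simp add: T1dL_def; algebra)
lemma pl_Y2d: "peval Y2dL (z::complex) = z^5 * peval mL z ^ 3 * peval QL z ^ 3 * peval PL z ^ 3"
  unfolding pls by (simp add: Y2dL_def; algebra)
lemma pl_T2d: "peval T2dL (z::complex) = z^6 * peval mL z ^ 6 * peval QL z ^ 4"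
  unfolding pls by (simp add: T2dL_def; algebra)
lemma pl_ab: "peval abL (z::complex) = 4 * peval pL z * peval RL z * peval GL z - z^3 * peval mL z * peval QL z * peval PL z"
  unfolding pls by (simp add: abL_def; algebra)
lemma pl_nd: "peval ndL (z::complex) = 16 * peval pL z ^ 4 * peval RL z ^ 2 - z^4 * peval mL z ^ 4 * peval QL z ^ 2"
  unfolding pls by (simp add: ndL_def; algebra)
lemma pl_e0: "peval pL (z::complex) * peval RL z * peval e0L z =
   4 * peval pL z * peval RL z * peval GL z * z * peval mL z ^ 3 * peval QL z - 16 * peval pL z ^ 4 * peval RL z ^ 2 * peval PL z"
  unfolding pls by (simp add: e0L_def; algebra)

lemma l_T1n: "T1nL = psmul 192 (pmul (pmul pL (pmul pL pL)) (pmul RL v0L))" by code_simp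
lemma l_T2n: "T2nL = psmul 192 (pmul (pmul pL pL) t2L)" by code_simp
lemma pl_T1n: "peval T1nL (z::complex) = 192 * peval pL z ^ 3 * peval RL z * peval v0L z"
  unfolding l_T1n by (simp add: power3_eq_cube mult.assoc)
lemma pl_T2n: "peval T2nL (z::complex) = 192 * peval pL z ^ 2 * peval t2L z"
  unfolding l_T2n by (simp add: power2_eq_square mult.assoc)

lemma chkY1: "zl (psub (pmul (psub (pmul (pder YaL) YbL) (pmul YaL (pder YbL))) Y1dL) (pmul y1L (pmul YbL YbL)))"
  by code_simp
lemma chkY2: "zl (psub (pmul (psub (pmul (pder y1L) Y1dL) (pmul y1L (pder Y1dL))) Y2dL) (pmul y2L (pmul Y1dL Y1dL)))"
  by code_simp
lemma chkT1: "zl (psub (pmul (psub (pmul (pder TaL) TbL) (pmul TaL (pder TbL))) T1dL) (pmul T1nL (pmul TbL TbL)))"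
  by code_simp
lemma chkT2: "zl (psub (pmul (psub (pmul (pder T1nL) T1dL) (pmul T1nL (pder T1dL))) T2dL) (pmul T2nL (pmul T1dL T1dL)))"
  by code_simp
lemma chkKr: "zl KrL" by code_simp


theorem mainTheorem10:
  fixes s :: complex
  assumes "s \<noteq> 0" and "s \<noteq> 2"
    and "s^2 + 4 * s + 6 \<noteq> 0"
    and "s^4 - 4 * s^2 + 32 * s - 28 \<noteq> 0"
    and "deriv T10 s \<noteq> 0"
    and "T10 s \<noteq> 0" and "T10 s \<noteq> 1"
    and "Y10 s \<noteq> 0" and "Y10 s \<noteq> 1" and "Y10 s \<noteq> T10 s"
  shows "solves_PVI_at (1/3) (1/2) (1/2) (2/3) T10 Y10 s"
proof -
  define S0 where "S0 = {z::complex. z \<noteq> 0 \<and> z \<noteq> 2 \<and> z^2 + 4 * z + 6 \<noteq> 0 \<and> z^4 - 4 * z^2 + 32 * z - 28 \<noteq> 0}"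
  have oS: "open S0"
    unfolding S0_def
    by (intro open_Collect_conj open_Collect_neq continuous_intros)
  have sS: "s \<in> S0" using assms(1-4) by (simp add: S0_def)
  have nzS: "z \<noteq> 0 \<and> peval mL z \<noteq> 0 \<and> peval QL z \<noteq> 0 \<and> peval PL z \<noteq> 0" if "z \<in> S0" for z
    using that by (simp add: S0_def pls)
  have Yrep: "Y10 z = peval YaL z / peval YbL z" if "z \<in> S0" for z
    using nzS[OF that] unfolding pl_Ya pl_Yb Y10_def r10_def pls
    by (simp add: field_simps)
  have Trep: "T10 z = peval TaL z / peval TbL z" if "z \<in> S0" for z
  proof -
    have nz: "z \<noteq> 0" "z - 2 \<noteq> 0" "z^2 + 4*z + 6 \<noteq> 0" using nzS[OF that] by (simp_all add: pls)
    have "(z + 1)^2 * r10 z / ((z - 2)^2 * z^2) = 4*(z+1)^2*(3*z^2 - 4*z + 2) / ((z^2 + 4*z + 6)*(z-2)^2*z^2)"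
      unfolding r10_def using nz by (simp add: field_simps)
    then have "T10 z = (4*(z+1)^2*(3*z^2 - 4*z + 2))^2 / ((z^2 + 4*z + 6)*(z-2)^2*z^2)^2"
      unfolding T10_def by (simp add: power_divide)
    also have "\<dots> = peval TaL z / peval TbL z"
      unfolding pl_Ta pl_Tb pls by (simp add: power_mult_distrib power_mult[symmetric] mult_ac)
    finally show ?thesis .
  qed
  have dY: "(Y10 has_field_derivative peval y1L z / peval Y1dL z) (at z)" if "z \<in> S0" for z
    by (rule quot_deriv[OF oS that Yrep _ _ chkY1]) (use nzS[OF that] in \<open>simp_all add: pl_Yb pl_Y1d\<close>)
  have dY': "deriv Y10 z = peval y1L z / peval Y1dL z" if "z \<in> S0" for z
    using dY[OF that] by (rule DERIV_imp_deriv)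
  have dT: "(T10 has_field_derivative peval T1nL z / peval T1dL z) (at z)" if "z \<in> S0" for z
    by (rule quot_deriv[OF oS that Trep _ _ chkT1]) (use nzS[OF that] in \<open>simp_all add: pl_Tb pl_T1d\<close>)
  have dT': "deriv T10 z = peval T1nL z / peval T1dL z" if "z \<in> S0" for z
    using dT[OF that] by (rule DERIV_imp_deriv)
  have ddY: "(deriv Y10 has_field_derivative peval y2L s / peval Y2dL s) (at s)"
    by (rule quot_deriv[OF oS sS dY' _ _ chkY2]) (use nzS[OF sS] in \<open>simp_all add: pl_Y1d pl_Y2d\<close>)
  have ddT: "(deriv T10 has_field_derivative peval T2nL s / peval T2dL s) (at s)"
    by (rule quot_deriv[OF oS sS dT' _ _ chkT2]) (use nzS[OF sS] in \<open>simp_all add: pl_T1d pl_T2d\<close>)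
  note D1 = dY'[OF sS] and D2 = DERIV_imp_deriv[OF ddY] and D3 = dT'[OF sS] and D4 = DERIV_imp_deriv[OF ddT]
  define m where "m = peval mL s"
  define p where "p = peval pL s"
  define Q where "Q = peval QL s"
  define P where "P = peval PL s"
  define R where "R = peval RL s"
  define G where "G = peval GL s"
  define ab where "ab = peval abL s"
  define nd where "nd = peval ndL s"
  define e0 where "e0 = peval e0L s"
  define y1 where "y1 = peval y1L s"
  define v0 where "v0 = peval v0L s"
  define y2 where "y2 = peval y2L s"
  define t2 where "t2 = peval t2L s"
  have nz0: "s \<noteq> 0" "m \<noteq> 0" "Q \<noteq> 0" "P \<noteq> 0" using nzS[OF sS] by (simp_all add: m_def Q_def P_def)
  have hy: "Y10 s = 4 * p * R * G / (s^3 * m * Q * P)"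
    using Yrep[OF sS] by (simp add: pl_Ya pl_Yb p_def R_def G_def m_def Q_def P_def)
  have ht: "T10 s = 16 * p^4 * R^2 / (s^4 * m^4 * Q^2)"
    using Trep[OF sS] by (simp add: pl_Ta pl_Tb p_def R_def m_def Q_def)
  have hym1: "Y10 s - 1 = ab / (s^3 * m * Q * P)"
    unfolding hy ab_def pl_ab using nz0 by (simp add: field_simps p_def R_def G_def m_def Q_def P_def)
  have htm1: "T10 s - 1 = nd / (s^4 * m^4 * Q^2)"
    unfolding ht nd_def pl_nd using nz0 by (simp add: field_simps p_def R_def m_def Q_def)
  have hymt: "Y10 s - T10 s = p * R * e0 / (s^4 * m^4 * Q^2 * P)"
    unfolding hy ht p_def R_def e0_def pl_e0 using nz0 unfolding m_def Q_def P_def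
    by (simp add: field_simps G_def) algebra
  have hW: "deriv Y10 s / deriv T10 s = (y1 / (s^4 * m^2 * Q^2 * P^2)) / (192 * p^3 * R * v0 / (s^5 * m^5 * Q^3))"
    unfolding D1 D3 by (simp add: pl_Y1d pl_T1n pl_T1d y1_def m_def Q_def P_def p_def R_def v0_def)
  have hZ: "(deriv (deriv Y10) s * deriv T10 s - deriv Y10 s * deriv (deriv T10) s) / (deriv T10 s)^3
     = ((y2 / (s^5 * m^3 * Q^3 * P^3)) * (192 * p^3 * R * v0 / (s^5 * m^5 * Q^3))
              - (y1 / (s^4 * m^2 * Q^2 * P^2)) * (192 * p^2 * t2 / (s^6 * m^6 * Q^4))) / (192 * p^3 * R * v0 / (s^5 * m^5 * Q^3))^3"
    unfolding D1 D2 D3 D4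
    by (simp add: pl_Y1d pl_T1n pl_T1d pl_Y2d pl_T2n pl_T2d y1_def y2_def t2_def m_def Q_def P_def p_def R_def v0_def)
  have pR: "p \<noteq> 0" "R \<noteq> 0" using assms(6) unfolding ht by auto
  have nzG: "G \<noteq> 0" using assms(8) unfolding hy by auto
  have nzab: "ab \<noteq> 0" using assms(9) hym1 by auto
  have nznd: "nd \<noteq> 0" using assms(7) htm1 by auto
  have nze0: "e0 \<noteq> 0" using assms(10) hymt by auto
  have nzv0: "v0 \<noteq> 0" using assms(5) unfolding D3 pl_T1n v0_def by auto
  have hKr: "16 * G * ab * e0 * nd^2 * (y2 * p * R * v0 - y1 * P * t2)
      - 2 * v0 * nd^2 * ((ab + 4 * p * R * G) * e0 + 4 * G * ab * s * m^3 * Q) * y1^2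
      + 192 * P * v0^2 * G * ab * nd * ((nd + 16 * p^4 * R^2) * e0 + 16 * p^3 * R * nd * P) * y1
      - v0^3 * p * R * s * m * Q * (512 * G^2 * ab^2 * e0^2 * m^2 - 512 * p^2 * ab^2 * e0^2 * s^2 * P^2
          + 1152 * G^2 * nd * e0^2 * s^2 * P^2 + 55296 * p^2 * nd * G^2 * ab^2 * m^2 * P^2) = 0"
  proof -
    have "peval KrL s = 0" by (rule peval_zl[OF chkKr])
    then show ?thesis
      unfolding KrL_def X1L_def X2L_def X3L_def X4L_def ZbL_def B1L_def B2L_def e0sqL_def GsqL_def absqL_def
        P2s2L_def InnL_def
      by (simp add: pl_s pl_Ya pl_Ta m_def p_def Q_def P_def R_def G_def ab_def nd_def e0_def y1_def v0_def y2_def t2_def) algebra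
  qed
  have "(deriv (deriv Y10) s * deriv T10 s - deriv Y10 s * deriv (deriv T10) s) / (deriv T10 s)^3
      = RHS (Y10 s) (Y10 s - 1) (Y10 s - T10 s) (T10 s) (T10 s - 1) (deriv Y10 s / deriv T10 s)"
    by (rule key[OF nz0(1,2) pR(1) nz0(3,4) pR(2) nzG nzab nznd nze0 nzv0 hy hym1 ht htm1 hymt hW hZ hKr])
  then show ?thesis
    unfolding solves_PVI_at_def Let_def rhs_eq .
qed


end
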